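(* Let $X$ be a real Banach space, $F$ a non-empty closed bounded subset of $X$, and $x\in X$ with $Q_F(x)\neq\emptyset$. The following are equivalent. (1) $F$ is sup-compact at $x$. (2) $Q_F(x)$ is compact and $Q_F(x,\frac1n)\xrightarrow{V}Q_F(x)$. (3) $Q_F(x)$ is compact and $Q_F(x,\frac1n)\xrightarrow{H}Q_F(x)$. (4) $Q_F(x)$ is compact and $F$ is strongly remotal at $x$. (5) $\alpha(Q_F(x,\frac1n))\to0$.
   Context: $B_X$ is the closed unit ball. $r(F,x)=\sup_{y\in F}\|x-y\|$, $Q_F(x,\delta)=\{y\in F:\|x-y\|\ge r(F,x)-\delta\}$ for $\delta\ge0$, $Q_F(x)=Q_F(x,0)$. $F$ is sup-compact at $x$ if every sequence $(y_n)$ in $F$ with $\|x-y_n\|\to r(F,x)$ has a subsequence converging to an element of $F$. $F$ is strongly remotal at $x$ if for every $\epsilon>0$ there is $\delta>0$ with $Q_F(x,\delta)\subseteq Q_F(x)+\epsilon B_X$. For closed bounded sets $C_n,C_0$: $C_n\xrightarrow{V}C_0$ means both (a) for every open $U\supseteq C_0$, eventually $C_n\subseteq U$, and (b) for every open $U$ with $C_0\cap U\ne\emptyset$, eventually $C_n\cap U\neq\emptyset$; $C_n\xrightarrow{H}C_0$ means for every $\epsilon>0$, eventually $C_n\subseteq C_0+\epsilon B_X$ and $C_0\subseteq C_n+\epsilon B_X$. $\alpha(A)=\inf\{\epsilon>0:A\subseteq E+\epsilon B_X$ for some finite $E\subseteq X\}$. *)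

theory Defs
  imports "HOL-Analysis.Analysis"
begin

definition ball_sum :: "'a::real_normed_vector set \<Rightarrow> real \<Rightarrow> 'a set" where
  "ball_sum A e = {a + e *\<^sub>R b | a b. a \<in> A \<and> norm b \<le> 1}"

definition farthest_rad :: "'a::real_normed_vector set \<Rightarrow> 'a \<Rightarrow> real" where
  "farthest_rad F x = (SUP y\<in>F. norm (x - y))"

definition Qd :: "'a::real_normed_vector set \<Rightarrow> 'a \<Rightarrow> real \<Rightarrow> 'a set" where
  "Qd F x d = {y \<in> F. norm (x - y) \<ge> farthest_rad F x - d}"

definition Q :: "'a::real_normed_vector set \<Rightarrow> 'a \<Rightarrow> 'a set" where
  "Q F x = Qd F x 0"

definition sup_compact :: "'a::real_normed_vector set \<Rightarrow> 'a \<Rightarrow> bool" where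
  "sup_compact F x \<longleftrightarrow>
     (\<forall>y::nat \<Rightarrow> 'a. (\<forall>n. y n \<in> F) \<and> (\<lambda>n. norm (x - y n)) \<longlonglongrightarrow> farthest_rad F x \<longrightarrow>
        (\<exists>r l. strict_mono r \<and> l \<in> F \<and> (y \<circ> r) \<longlonglongrightarrow> l))"

definition strongly_remotal :: "'a::real_normed_vector set \<Rightarrow> 'a \<Rightarrow> bool" where
  "strongly_remotal F x \<longleftrightarrow>
     (\<forall>e>0. \<exists>d>0. Qd F x d \<subseteq> ball_sum (Q F x) e)"

definition vietoris_conv :: "(nat \<Rightarrow> 'a::real_normed_vector set) \<Rightarrow> 'a set \<Rightarrow> bool" where
  "vietoris_conv C C0 \<longleftrightarrow>
     (\<forall>U. open U \<and> C0 \<subseteq> U \<longrightarrow> (\<forall>\<^sub>F n in sequentially. C n \<subseteq> U)) \<and>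
     (\<forall>U. open U \<and> C0 \<inter> U \<noteq> {} \<longrightarrow> (\<forall>\<^sub>F n in sequentially. C n \<inter> U \<noteq> {}))"

definition hausdorff_conv :: "(nat \<Rightarrow> 'a::real_normed_vector set) \<Rightarrow> 'a set \<Rightarrow> bool" where
  "hausdorff_conv C C0 \<longleftrightarrow>
     (\<forall>e>0. \<forall>\<^sub>F n in sequentially. C n \<subseteq> ball_sum C0 e \<and> C0 \<subseteq> ball_sum (C n) e)"

definition kur_alpha :: "'a::real_normed_vector set \<Rightarrow> real" where
  "kur_alpha A = Inf {e. e > 0 \<and> (\<exists>E. finite E \<and> A \<subseteq> ball_sum E e)}"

end

theory Submission
  imports Defs
begin

lemma ball_sum_eq:
  assumes "e > 0"
  shows "ball_sum A e = (\<Union>a\<in>A. cball a e)"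
proof
  show "ball_sum A e \<subseteq> (\<Union>a\<in>A. cball a e)"
    using assms by (auto simp: ball_sum_def dist_norm)
next
  show "(\<Union>a\<in>A. cball a e) \<subseteq> ball_sum A e"
  proof
    fix y assume "y \<in> (\<Union>a\<in>A. cball a e)"
    then obtain a where a: "a \<in> A" "norm (a - y) \<le> e" by (auto simp: dist_norm)
    have "y = a + e *\<^sub>R ((1/e) *\<^sub>R (y - a))" using assms by simp
    moreover have "norm ((1/e) *\<^sub>R (y - a)) \<le> 1"
      using assms a by (simp add: norm_minus_commute divide_le_eq)
    ultimately show "y \<in> ball_sum A e" unfolding ball_sum_def using a by blast
  qed
qed

lemma bdd_norm: assumes "bounded F" shows "bdd_above ((\<lambda>y. norm (x - y)) ` F)"
proof -
  obtain B where "\<forall>y\<in>F. norm y \<le> B" using assms bounded_iff by blast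
  then have "\<forall>y\<in>F. norm (x - y) \<le> norm x + B"
    by (meson add_left_mono norm_triangle_ineq4 order_trans)
  then show ?thesis by (auto intro: bdd_aboveI2)
qed

lemma le_rad: "bounded F \<Longrightarrow> y \<in> F \<Longrightarrow> norm (x - y) \<le> farthest_rad F x"
  unfolding farthest_rad_def using bdd_norm by (metis cSUP_upper)

lemma Qd_sub: "Qd F x d \<subseteq> F" by (auto simp: Qd_def)

lemma Qd_mono: "d \<le> d' \<Longrightarrow> Qd F x d \<subseteq> Qd F x d'" by (auto simp: Qd_def)

lemma Q_eq: "bounded F \<Longrightarrow> Q F x = {y\<in>F. norm (x - y) = farthest_rad F x}"
  unfolding Q_def Qd_def using le_rad[of F _ x] by force

lemma closed_Q: assumes "closed F" shows "closed (Q F x)"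
proof -
  have "Q F x = F \<inter> {y. farthest_rad F x \<le> norm (x - y)}" by (auto simp: Q_def Qd_def)
  moreover have "closed {y. farthest_rad F x \<le> norm (x - y)}"
    by (intro closed_Collect_le continuous_intros)
  ultimately show ?thesis using assms by auto
qed

lemma kur_nonempty:
  assumes "bounded F" "A \<subseteq> F"
  shows "\<exists>e. e > 0 \<and> (\<exists>E. finite E \<and> A \<subseteq> ball_sum E e)"
proof -
  obtain B where B: "B > 0" "\<forall>y\<in>F. norm y \<le> B" using assms bounded_pos by blast
  have "A \<subseteq> ball_sum {0} B" using B assms by (auto simp: ball_sum_eq)
  then show ?thesis using B by blast
qed

lemma kur_le:
  assumes "e > 0" "finite E" "A \<subseteq> ball_sum E e"
  shows "kur_alpha A \<le> e" "kur_alpha A \<ge> 0"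
proof -
  have bdd: "bdd_below {e. e > 0 \<and> (\<exists>E. finite E \<and> A \<subseteq> ball_sum E e)}"
    by (rule bdd_belowI[of _ 0]) auto
  show "kur_alpha A \<le> e" unfolding kur_alpha_def
    by (rule cInf_lower[OF _ bdd]) (use assms in auto)
  show "kur_alpha A \<ge> 0" unfolding kur_alpha_def
    by (rule cInf_greatest) (use assms in auto)
qed

lemma kur_lt:
  assumes "bounded F" "A \<subseteq> F" "kur_alpha A < e"
  shows "\<exists>e'. e' > 0 \<and> e' < e \<and> (\<exists>E. finite E \<and> A \<subseteq> ball_sum E e')"
proof -
  have "{e. e > 0 \<and> (\<exists>E. finite E \<and> A \<subseteq> ball_sum E e)} \<noteq> {}" using kur_nonempty[OF assms(1,2)] by auto
  from cInf_lessD[OF this assms(3)[unfolded kur_alpha_def]] show ?thesis by auto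
qed

lemma tend_r:
  assumes "bounded F" "\<And>n. y n \<in> Qd F x (1 / real (Suc n))"
  shows "(\<lambda>n. norm (x - y n)) \<longlonglongrightarrow> farthest_rad F x"
proof (rule tendsto_sandwich[of "\<lambda>n. farthest_rad F x - 1 / real (Suc n)" _ _ "\<lambda>n. farthest_rad F x"])
  show "\<forall>\<^sub>F n in sequentially. farthest_rad F x - 1 / real (Suc n) \<le> norm (x - y n)"
    using assms(2) by (auto simp: Qd_def)
  show "\<forall>\<^sub>F n in sequentially. norm (x - y n) \<le> farthest_rad F x"
  proof (rule always_eventually, rule allI)
    fix n show "norm (x - y n) \<le> farthest_rad F x"
      using assms Qd_sub[of F x] le_rad[of F "y n" x] by blast
  qed
  have l1: "(\<lambda>n. 1 / real (Suc n)) \<longlonglongrightarrow> 0" using LIMSEQ_Suc[OF lim_1_over_n] by simp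
  show "(\<lambda>n. farthest_rad F x - 1 / real (Suc n)) \<longlonglongrightarrow> farthest_rad F x"
    using tendsto_diff[OF tendsto_const[of "farthest_rad F x"] l1] by simp
qed auto

lemma ev_Qd:
  assumes "\<And>m. y m \<in> F" "(\<lambda>m. norm (x - y m)) \<longlonglongrightarrow> farthest_rad F x" "d > 0"
  shows "\<forall>\<^sub>F m in sequentially. y m \<in> Qd F x d"
proof -
  have "\<forall>\<^sub>F m in sequentially. dist (norm (x - y m)) (farthest_rad F x) < d"
    using assms(2,3) tendstoD by blast
  then show ?thesis
    by eventually_elim (use assms(1) in \<open>auto simp: Qd_def dist_real_def\<close>)
qed

lemma ev_small: "d > 0 \<Longrightarrow> \<forall>\<^sub>F n in sequentially. 1 / real n \<le> d \<and> n > 0"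
proof -
  assume d: "d > 0"
  obtain N :: nat where N: "1 / d < N" using reals_Archimedean2 by blast
  have "1 / real n \<le> d \<and> n > 0" if "n \<ge> N" for n
  proof -
    have "1 / d < real n" using N that by linarith
    moreover then have "real n > 0" using d by (smt (verit) divide_pos_pos)
    ultimately show ?thesis using d by (simp add: field_simps)
  qed
  then show ?thesis unfolding eventually_sequentially by blast
qed

lemma Q_sub_Qd: "0 \<le> d \<Longrightarrow> Q F x \<subseteq> Qd F x d"
  unfolding Q_def by (rule Qd_mono)

lemma p1_p4:
  fixes F :: "'a::banach set"
  assumes "closed F" "bounded F" "sup_compact F x"
  shows "compact (Q F x) \<and> strongly_remotal F x"
proof
  show "compact (Q F x)" unfolding compact_eq_seq_compact_metric
  proof (rule seq_compactI)
    fix f :: "nat \<Rightarrow> 'a" assume f: "\<forall>n. f n \<in> Q F x"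
    then have fF: "\<forall>n. f n \<in> F" using Q_eq[OF assms(2)] by auto
    have "(\<lambda>n. norm (x - f n)) = (\<lambda>n. farthest_rad F x)" using f Q_eq[OF assms(2)] by auto
    then have "(\<lambda>n. norm (x - f n)) \<longlonglongrightarrow> farthest_rad F x" by simp
    then obtain \<sigma> l where s: "strict_mono \<sigma>" "l \<in> F" "(f \<circ> \<sigma>) \<longlonglongrightarrow> l"
      using assms(3) fF unfolding sup_compact_def by blast
    moreover have "l \<in> Q F x"
      using closed_sequentially[OF closed_Q[OF assms(1), of x], of "f \<circ> \<sigma>" l] f s(3) by auto
    ultimately show "\<exists>l\<in>Q F x. \<exists>r. strict_mono r \<and> (f \<circ> r) \<longlonglongrightarrow> l" by blast
  qed
  show "strongly_remotal F x" unfolding strongly_remotal_def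
  proof (rule ccontr)
    assume "\<not> (\<forall>e>0. \<exists>d>0. Qd F x d \<subseteq> ball_sum (Q F x) e)"
    then obtain e where e: "e > 0" "\<forall>d>0. \<not> Qd F x d \<subseteq> ball_sum (Q F x) e" by blast
    have "\<forall>n. \<exists>y. y \<in> Qd F x (1 / real (Suc n)) \<and> y \<notin> ball_sum (Q F x) e"
    proof
      fix n
      have "(0::real) < 1 / real (Suc n)" by simp
      then show "\<exists>y. y \<in> Qd F x (1 / real (Suc n)) \<and> y \<notin> ball_sum (Q F x) e" using e(2) by blast
    qed
    then obtain y where y: "\<And>n. y n \<in> Qd F x (1 / real (Suc n))" "\<And>n. y n \<notin> ball_sum (Q F x) e"
      by metis
    have yF: "\<forall>n. y n \<in> F" using y(1) Qd_sub by blast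
    have lim: "(\<lambda>n. norm (x - y n)) \<longlonglongrightarrow> farthest_rad F x" using tend_r[OF assms(2) y(1)] .
    obtain \<sigma> l where s: "strict_mono \<sigma>" "l \<in> F" "(y \<circ> \<sigma>) \<longlonglongrightarrow> l"
      using assms(3) yF lim unfolding sup_compact_def by blast
    have "(\<lambda>n. norm (x - (y \<circ> \<sigma>) n)) \<longlonglongrightarrow> norm (x - l)" by (intro tendsto_intros s(3))
    moreover have "(\<lambda>n. norm (x - (y \<circ> \<sigma>) n)) \<longlonglongrightarrow> farthest_rad F x"
      using LIMSEQ_subseq_LIMSEQ[OF lim s(1)] by (simp add: o_def)
    ultimately have "norm (x - l) = farthest_rad F x" using LIMSEQ_unique by blast
    then have lQ: "l \<in> Q F x" using Q_eq[OF assms(2)] s(2) by auto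
    obtain N where N: "\<forall>n\<ge>N. norm ((y \<circ> \<sigma>) n - l) < e" using s(3) e(1) unfolding LIMSEQ_iff by blast
    then have "dist l (y (\<sigma> N)) \<le> e" by (auto simp: dist_norm norm_minus_commute intro: less_imp_le)
    then have "y (\<sigma> N) \<in> ball_sum (Q F x) e" unfolding ball_sum_eq[OF e(1)] using lQ by auto
    then show False using y(2) by blast
  qed
qed

lemma p4_p3:
  assumes "strongly_remotal F x"
  shows "hausdorff_conv (\<lambda>n. Qd F x (1 / real n)) (Q F x)"
  unfolding hausdorff_conv_def
proof (intro allI impI)
  fix e :: real assume e: "e > 0"
  obtain d where d: "d > 0" "Qd F x d \<subseteq> ball_sum (Q F x) e"
    using assms e unfolding strongly_remotal_def by blast
  show "\<forall>\<^sub>F n in sequentially. Qd F x (1 / real n) \<subseteq> ball_sum (Q F x) e \<and> Q F x \<subseteq> ball_sum (Qd F x (1 / real n)) e"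
    using ev_small[OF d(1)]
  proof eventually_elim
    case (elim n)
    have "Qd F x (1 / real n) \<subseteq> ball_sum (Q F x) e" using Qd_mono[of "1 / real n" d F x] elim d by blast
    moreover have "Q F x \<subseteq> ball_sum (Qd F x (1 / real n)) e"
    proof
      fix q assume "q \<in> Q F x"
      then have "q \<in> Qd F x (1 / real n)" using Q_sub_Qd[of "1 / real n" F x] by auto
      then show "q \<in> ball_sum (Qd F x (1 / real n)) e" unfolding ball_sum_eq[OF e] using e by force
    qed
    ultimately show ?case by blast
  qed
qed

lemma p3_p2:
  assumes "compact (Q F x)" "hausdorff_conv (\<lambda>n. Qd F x (1 / real n)) (Q F x)"
  shows "vietoris_conv (\<lambda>n. Qd F x (1 / real n)) (Q F x)"
  unfolding vietoris_conv_def
proof (intro conjI allI impI)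
  fix U assume U: "open U \<and> Q F x \<subseteq> U"
  obtain e where e: "e > 0" "(\<Union>q\<in>Q F x. cball q e) \<subseteq> U"
    using compact_subset_open_imp_cball_epsilon_subset assms(1) U by metis
  have "\<forall>\<^sub>F n in sequentially. Qd F x (1 / real n) \<subseteq> ball_sum (Q F x) e \<and> Q F x \<subseteq> ball_sum (Qd F x (1 / real n)) e"
    using assms(2) e(1) unfolding hausdorff_conv_def by blast
  then show "\<forall>\<^sub>F n in sequentially. Qd F x (1 / real n) \<subseteq> U"
    by eventually_elim (use e ball_sum_eq[OF e(1)] in blast)
next
  fix U assume U: "open U \<and> Q F x \<inter> U \<noteq> {}"
  show "\<forall>\<^sub>F n in sequentially. Qd F x (1 / real n) \<inter> U \<noteq> {}"
  proof (rule always_eventually, rule allI)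
    fix n
    show "Qd F x (1 / real n) \<inter> U \<noteq> {}" using U Q_sub_Qd[of "1 / real n" F x] by auto
  qed
qed

lemma p2_p1:
  fixes F :: "'a::banach set"
  assumes "closed F" "bounded F" "compact (Q F x)" "Q F x \<noteq> {}"
    "vietoris_conv (\<lambda>n. Qd F x (1 / real n)) (Q F x)"
  shows "sup_compact F x"
  unfolding sup_compact_def
proof (intro allI impI)
  fix y :: "nat \<Rightarrow> 'a"
  assume y: "(\<forall>n. y n \<in> F) \<and> (\<lambda>n. norm (x - y n)) \<longlonglongrightarrow> farthest_rad F x"
  have near: "\<forall>\<^sub>F m in sequentially. \<exists>q\<in>Q F x. dist (y m) q < e" if e: "e > 0" for e :: real
  proof -
    have O: "open (\<Union>q\<in>Q F x. ball q e)" by (intro open_UN ballI open_ball)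
    have S: "Q F x \<subseteq> (\<Union>q\<in>Q F x. ball q e)"
    proof
      fix q assume "q \<in> Q F x"
      then show "q \<in> (\<Union>q\<in>Q F x. ball q e)" using e by (intro UN_I[of q]) auto
    qed
    have V: "\<forall>U. open U \<and> Q F x \<subseteq> U \<longrightarrow> (\<forall>\<^sub>F n in sequentially. Qd F x (1 / real n) \<subseteq> U)"
      using assms(5) unfolding vietoris_conv_def by (rule conjunct1)
    have "\<forall>\<^sub>F n in sequentially. Qd F x (1 / real n) \<subseteq> (\<Union>q\<in>Q F x. ball q e)"
      using V[rule_format, OF conjI[OF O S]] .
    then obtain N where N: "\<forall>n\<ge>N. Qd F x (1 / real n) \<subseteq> (\<Union>q\<in>Q F x. ball q e)"
      unfolding eventually_sequentially by blast
    have pos: "(0::real) < 1 / real (Suc N)" by simp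
    have "\<forall>\<^sub>F m in sequentially. y m \<in> Qd F x (1 / real (Suc N))"
      by (rule ev_Qd[OF _ _ pos]) (use y in auto)
    then show ?thesis
    proof eventually_elim
      case (elim m)
      have "Qd F x (1 / real (Suc N)) \<subseteq> (\<Union>q\<in>Q F x. ball q e)"
        using N[rule_format, of "Suc N"] by (simp only: le_SucI order_refl simp_thms)
      then have "y m \<in> (\<Union>q\<in>Q F x. ball q e)" using elim by (rule subsetD)
      then obtain q where "q \<in> Q F x" "dist q (y m) < e" by auto
      then show ?case by (metis dist_commute)
    qed
  qed
  have "\<forall>m. \<exists>q\<in>Q F x. \<forall>q'\<in>Q F x. dist (y m) q \<le> dist (y m) q'"
  proof
    fix m
    show "\<exists>q\<in>Q F x. \<forall>q'\<in>Q F x. dist (y m) q \<le> dist (y m) q'"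
      by (rule continuous_attains_inf[OF assms(3,4)]) (intro continuous_intros)
  qed
  then obtain q where q0: "\<forall>m. q m \<in> Q F x \<and> (\<forall>q'\<in>Q F x. dist (y m) (q m) \<le> dist (y m) q')"
    using choice[of "\<lambda>m q. q \<in> Q F x \<and> (\<forall>q'\<in>Q F x. dist (y m) q \<le> dist (y m) q')"] unfolding Bex_def by blast
  then have q: "\<And>m. q m \<in> Q F x" "\<And>m q'. q' \<in> Q F x \<Longrightarrow> dist (y m) (q m) \<le> dist (y m) q'"
    by blast+
  have d0: "(\<lambda>m. dist (y m) (q m)) \<longlonglongrightarrow> 0"
  proof (rule tendstoI)
    fix e :: real assume "e > 0"
    from near[OF this] show "\<forall>\<^sub>F m in sequentially. dist (dist (y m) (q m)) 0 < e"
    proof eventually_elim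
      case (elim m)
      then obtain q' where "q' \<in> Q F x" "dist (y m) q' < e" by blast
      then show ?case using q(2)[of q' m] by simp
    qed
  qed
  obtain l \<sigma> where l: "l \<in> Q F x" "strict_mono \<sigma>" "(q \<circ> \<sigma>) \<longlonglongrightarrow> l"
    using seq_compactE[OF assms(3)[unfolded compact_eq_seq_compact_metric], of q] q(1) by blast
  have "(\<lambda>n. dist (y (\<sigma> n)) (q (\<sigma> n))) \<longlonglongrightarrow> 0"
    using LIMSEQ_subseq_LIMSEQ[OF d0 l(2)] by (simp add: o_def)
  then have "(\<lambda>n. y (\<sigma> n) - q (\<sigma> n)) \<longlonglongrightarrow> 0"
    by (simp add: dist_norm tendsto_norm_zero_iff)
  from tendsto_add[OF l(3)[unfolded o_def] this] have "(y \<circ> \<sigma>) \<longlonglongrightarrow> l" by (simp add: o_def)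
  moreover have "l \<in> F" using l(1) Q_eq[OF assms(2)] by auto
  ultimately show "\<exists>r l. strict_mono r \<and> l \<in> F \<and> (y \<circ> r) \<longlonglongrightarrow> l" using l(2) by blast
qed

lemma p4_p5:
  fixes F :: "'a::banach set"
  assumes "bounded F" "compact (Q F x)" "strongly_remotal F x"
  shows "(\<lambda>n. kur_alpha (Qd F x (1 / real n))) \<longlonglongrightarrow> 0"
proof (rule tendstoI)
  fix e :: real assume e: "e > 0"
  then have e4: "e / 4 > 0" by simp
  obtain d where d: "d > 0" "Qd F x d \<subseteq> ball_sum (Q F x) (e / 4)"
    using assms(3) e4 unfolding strongly_remotal_def by blast
  obtain E where E: "finite E" "Q F x \<subseteq> (\<Union>p\<in>E. ball p (e / 4))"
    using assms(2) e4 unfolding compact_eq_totally_bounded by blast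
  have sub: "ball_sum (Q F x) (e / 4) \<subseteq> ball_sum E (e / 2)"
  proof
    fix z assume "z \<in> ball_sum (Q F x) (e / 4)"
    then obtain q where q: "q \<in> Q F x" "dist q z \<le> e / 4" unfolding ball_sum_eq[OF e4] by auto
    then obtain p where p: "p \<in> E" "dist p q < e / 4" using E(2) by auto
    have "dist p z \<le> e / 2" using dist_triangle[of p z q] p q by simp
    then show "z \<in> ball_sum E (e / 2)" using ball_sum_eq[of "e/2" E] e p by auto
  qed
  show "\<forall>\<^sub>F n in sequentially. dist (kur_alpha (Qd F x (1 / real n))) 0 < e"
    using ev_small[OF d(1)]
  proof eventually_elim
    case (elim n)
    have "Qd F x (1 / real n) \<subseteq> ball_sum E (e / 2)" using Qd_mono[of "1 / real n" d F x] elim d sub by blast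
    then have "kur_alpha (Qd F x (1 / real n)) \<le> e / 2" "kur_alpha (Qd F x (1 / real n)) \<ge> 0"
      using kur_le[of "e / 2" E] E e by auto
    then show ?case using e by simp
  qed
qed

lemma p5_p1:
  fixes F :: "'a::banach set"
  assumes "closed F" "bounded F" "(\<lambda>n. kur_alpha (Qd F x (1 / real n))) \<longlonglongrightarrow> 0"
  shows "sup_compact F x"
  unfolding sup_compact_def
proof (intro allI impI)
  fix y :: "nat \<Rightarrow> 'a"
  assume y: "(\<forall>n. y n \<in> F) \<and> (\<lambda>n. norm (x - y n)) \<longlonglongrightarrow> farthest_rad F x"
  let ?S = "closure (range y)"
  have tb: "\<forall>\<epsilon>>0. \<exists>k. finite k \<and> ?S \<subseteq> (\<Union>p\<in>k. ball p \<epsilon>)"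
  proof (intro allI impI)
    fix \<epsilon> :: real assume \<epsilon>: "\<epsilon> > 0"
    then have "\<epsilon> / 2 > 0" by simp
    from tendstoD[OF assms(3) this] obtain N where
      N: "\<forall>n\<ge>N. dist (kur_alpha (Qd F x (1 / real n))) 0 < \<epsilon> / 2"
      unfolding eventually_sequentially by blast
    define n where "n = Suc N"
    have "dist (kur_alpha (Qd F x (1 / real n))) 0 < \<epsilon> / 2" using N[rule_format, of n] unfolding n_def by simp
    then have n: "kur_alpha (Qd F x (1 / real n)) < \<epsilon> / 2" by (simp add: dist_real_def)
    obtain e' E where E: "e' > 0" "e' < \<epsilon> / 2" "finite E" "Qd F x (1 / real n) \<subseteq> ball_sum E e'"
      using kur_lt[OF assms(2) Qd_sub n] by blast
    have pos: "(0::real) < 1 / real n" unfolding n_def by simp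
    have "\<forall>\<^sub>F m in sequentially. y m \<in> Qd F x (1 / real n)"
      by (rule ev_Qd[OF _ _ pos]) (use y in auto)
    then obtain M where M: "\<forall>m\<ge>M. y m \<in> Qd F x (1 / real n)"
      unfolding eventually_sequentially by blast
    define k where "k = E \<union> y ` {..<M}"
    have fk: "finite k" using E(3) unfolding k_def by simp
    have "range y \<subseteq> (\<Union>p\<in>k. cball p (\<epsilon> / 2))"
    proof
      fix z assume "z \<in> range y"
      then obtain m where z: "z = y m" by blast
      show "z \<in> (\<Union>p\<in>k. cball p (\<epsilon> / 2))"
      proof (cases "m < M")
        case True
        then have "z \<in> k" unfolding k_def z by blast
        moreover have "z \<in> cball z (\<epsilon> / 2)" using \<epsilon> by simp
        ultimately show ?thesis by (rule UN_I)
      next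
        case False
        then have "m \<ge> M" by simp
        then have "y m \<in> Qd F x (1 / real n)" using M by blast
        then have "z \<in> ball_sum E e'" using E(4) z by (rule_tac subsetD) auto
        then obtain p where "p \<in> E" "dist p z \<le> e'" unfolding ball_sum_eq[OF E(1)] by auto
        then have "p \<in> k" "z \<in> cball p (\<epsilon> / 2)" using E(2) unfolding k_def by auto
        then show ?thesis by (rule UN_I)
      qed
    qed
    then have "?S \<subseteq> (\<Union>p\<in>k. cball p (\<epsilon> / 2))"
      by (rule closure_minimal) (rule closed_UN[OF fk], simp)
    moreover have "(\<Union>p\<in>k. cball p (\<epsilon> / 2)) \<subseteq> (\<Union>p\<in>k. ball p \<epsilon>)"
      using \<epsilon> by (intro UN_mono) (auto simp: subset_iff)
    ultimately have "?S \<subseteq> (\<Union>p\<in>k. ball p \<epsilon>)" by (rule order_trans)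
    then show "\<exists>k. finite k \<and> ?S \<subseteq> (\<Union>p\<in>k. ball p \<epsilon>)" using fk by (intro exI[of _ k]) simp
  qed
  have "complete ?S" by (simp add: complete_eq_closed)
  then have "compact ?S" unfolding compact_eq_totally_bounded using tb by (rule conjI)
  moreover have "\<forall>n. y n \<in> ?S" using closure_subset[of "range y"] by auto
  ultimately obtain l \<sigma> where l: "l \<in> ?S" "strict_mono \<sigma>" "(y \<circ> \<sigma>) \<longlonglongrightarrow> l"
    using seq_compactE[of ?S y] unfolding compact_eq_seq_compact_metric by blast
  have "?S \<subseteq> F" using closure_minimal[of "range y" F] y assms(1) by auto
  then show "\<exists>r l. strict_mono r \<and> l \<in> F \<and> (y \<circ> r) \<longlonglongrightarrow> l" using l by blast
qed


theorem theorem2p5: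
  fixes F :: "'a::banach set" and x :: 'a
  assumes "F \<noteq> {}" and "closed F" and "bounded F" and "Q F x \<noteq> {}"
  defines "P1 \<equiv> sup_compact F x"
      and "P2 \<equiv> compact (Q F x) \<and> vietoris_conv (\<lambda>n. Qd F x (1 / real n)) (Q F x)"
      and "P3 \<equiv> compact (Q F x) \<and> hausdorff_conv (\<lambda>n. Qd F x (1 / real n)) (Q F x)"
      and "P4 \<equiv> compact (Q F x) \<and> strongly_remotal F x"
      and "P5 \<equiv> (\<lambda>n. kur_alpha (Qd F x (1 / real n))) \<longlonglongrightarrow> 0"
  shows "(P1 \<longleftrightarrow> P2) \<and> (P1 \<longleftrightarrow> P3) \<and> (P1 \<longleftrightarrow> P4) \<and> (P1 \<longleftrightarrow> P5)"
proof -
  have i14: "P1 \<Longrightarrow> P4" unfolding P1_def P4_def using p1_p4[OF assms(2,3)] by blast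
  have i43: "P4 \<Longrightarrow> P3" unfolding P3_def P4_def using p4_p3 by blast
  have i32: "P3 \<Longrightarrow> P2" unfolding P3_def P2_def using p3_p2 by blast
  have i21: "P2 \<Longrightarrow> P1" unfolding P1_def P2_def using p2_p1[OF assms(2,3) _ assms(4)] by blast
  have i45: "P4 \<Longrightarrow> P5" unfolding P4_def P5_def using p4_p5[OF assms(3)] by blast
  have i51: "P5 \<Longrightarrow> P1" unfolding P1_def P5_def using p5_p1[OF assms(2,3)] by blast
  show ?thesis using i14 i43 i32 i21 i45 i51 by blast
qed

end
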